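(* Let $\mathcal{G}^2_6$ be the $3$-graph on $[6]$ whose edges are all $3$-subsets of $[6]$ except $\{1,2,3\},\{1,2,6\},\{3,4,5\},\{4,5,6\}$. Then $\lambda(\mathcal{G}^2_6)\le 2/27$.
   Context: For a $3$-graph $\mathcal{T}$ on $[s]$, $p_{\mathcal{T}}(x)=\sum_{E\in\mathcal{T}}\prod_{i\in E}x_i$ and the Lagrangian is $\lambda(\mathcal{T})=\max\{p_{\mathcal{T}}(x): x\in\mathbb{R}^s,\ x_i\ge0,\ \sum_i x_i=1\}$. *)

theory Defs
  imports Complex_Main
begin

text \<open>A 3-graph on [s] = {1..s} is a set of 3-element subsets of {1..s}.
  Points x are functions nat => real; only coordinates 1..s matter.\<close>

definition lag_poly :: "nat set set \<Rightarrow> (nat \<Rightarrow> real) \<Rightarrow> real" where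
  "lag_poly T x = (\<Sum>E\<in>T. \<Prod>i\<in>E. x i)"

definition std_simplex :: "nat \<Rightarrow> (nat \<Rightarrow> real) set" where
  "std_simplex s = {x. (\<forall>i\<in>{1..s}. x i \<ge> 0) \<and> (\<Sum>i=1..s. x i) = 1 \<and> (\<forall>i. i \<notin> {1..s} \<longrightarrow> x i = 0)}"

definition lagrangian :: "nat \<Rightarrow> nat set set \<Rightarrow> real" where
  "lagrangian s T = (SUP x\<in>std_simplex s. lag_poly T x)"

definition G26 :: "nat set set" where
  "G26 = {E. E \<subseteq> {1..6} \<and> card E = 3} - {{1,2,3},{1,2,6},{3,4,5},{4,5,6}}"

end

theory Submission
  imports Defs
begin
lemma sorted_inj:
  fixes i j k a b c :: nat
  assumes "i<j" "j<k" "a<b" "b<c" "{i,j,k} = {a,b,c}"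
  shows "i=a \<and> j=b \<and> k=c"
proof -
  have "i \<in> {a,b,c}" "j \<in> {a,b,c}" "k \<in> {a,b,c}" "a \<in> {i,j,k}" "b \<in> {i,j,k}" "c \<in> {i,j,k}"
    using assms(5) by blast+
  then show ?thesis using assms(1-4) by auto
qed

lemma card3_sorted:
  fixes E :: "nat set"
  assumes "card E = 3"
  shows "\<exists>i j k. i<j \<and> j<k \<and> E={i,j,k}"
proof -
  obtain x y z where e: "E = {x,y,z}" "x\<noteq>y" "x\<noteq>z" "y\<noteq>z"
    using assms by (auto simp: card_3_iff)
  consider "x<y" "y<z" | "x<z" "z<y" | "y<x" "x<z" | "y<z" "z<x" | "z<x" "x<y" | "z<y" "y<x"
    using e by linarith
  then show ?thesis
  proof cases
    case 1 then show ?thesis using e by blast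
  next
    case 2 then show ?thesis using e by (metis insert_commute)
  next
    case 3 then show ?thesis using e by (metis insert_commute)
  next
    case 4 then show ?thesis using e by (metis insert_commute)
  next
    case 5 then show ?thesis using e by (metis insert_commute)
  next
    case 6 then show ?thesis using e by (metis insert_commute)
  qed
qed

definition S6 :: "(nat \<times> nat \<times> nat) set" where
  "S6 = {(i,j,k). i<j \<and> j<k \<and> 1\<le>i \<and> k\<le>6}"

definition f3 :: "nat \<times> nat \<times> nat \<Rightarrow> nat set" where
  "f3 t = (case t of (i,j,k) \<Rightarrow> {i,j,k})"

lemma inj_f3: "inj_on f3 S6"
  unfolding inj_on_def S6_def f3_def using sorted_inj by fastforce

lemma all3: "{E. E \<subseteq> {1..6} \<and> card E = 3} = f3 ` S6"
proof (rule set_eqI, rule iffI)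
  fix E assume "E \<in> {E. E \<subseteq> {1..6::nat} \<and> card E = 3}"
  then have E: "E \<subseteq> {1..6}" "card E = 3" by auto
  obtain i j k where "i<j" "j<k" "E={i,j,k}" using card3_sorted[OF E(2)] by blast
  then show "E \<in> f3 ` S6" using E(1) unfolding S6_def f3_def
    by (intro image_eqI[of _ _ "(i,j,k)"]) auto
next
  fix E assume "E \<in> f3 ` S6"
  then obtain i j k where "i<j" "j<k" "1\<le>i" "k\<le>6" "E={i,j,k}"
    unfolding S6_def f3_def by auto
  then show "E \<in> {E. E \<subseteq> {1..6::nat} \<and> card E = 3}" by auto
qed

definition T16 :: "(nat \<times> nat \<times> nat) set" where
  "T16 = S6 - {(1,2,3),(1,2,6),(3,4,5),(4,5,6)}"

lemma G26_img: "G26 = f3 ` T16"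
proof -
  have "f3 ` T16 = f3 ` S6 - f3 ` {(1,2,3),(1,2,6),(3,4,5),(4,5,6)}"
    unfolding T16_def
    by (rule inj_on_image_set_diff[OF inj_f3]) (auto simp: S6_def)
  also have "f3 ` {(1,2,3),(1,2,6),(3,4,5),(4,5,6)} = {{1,2,3},{1,2,6},{3,4,5},{4,5,6}}"
    by (simp add: f3_def)
  finally show ?thesis unfolding G26_def all3 by simp
qed

lemma T16_eq: "T16 = {(1,2,4),(1,2,5),(1,3,4),(1,3,5),(1,3,6),(1,4,5),(1,4,6),(1,5,6),(2,3,4),(2,3,5),(2,3,6),(2,4,5),(2,4,6),(2,5,6),(3,4,6),(3,5,6)}"
proof -
  have S: "S6 = {(1,2,3),(1,2,4),(1,2,5),(1,2,6),(1,3,4),(1,3,5),(1,3,6),(1,4,5),(1,4,6),(1,5,6),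
     (2,3,4),(2,3,5),(2,3,6),(2,4,5),(2,4,6),(2,5,6),(3,4,5),(3,4,6),(3,5,6),(4,5,6)}"
  proof (rule set_eqI, rule iffI)
    fix t assume "t \<in> S6"
    then obtain i j k where t: "t=(i,j,k)" "i<j" "j<k" "1\<le>i" "k\<le>6" unfolding S6_def by auto
    have hi: "i=1 \<or> i=2 \<or> i=3 \<or> i=4" and hj: "j=2 \<or> j=3 \<or> j=4 \<or> j=5"
      and hk: "k=3 \<or> k=4 \<or> k=5 \<or> k=6" using t by arith+
    then show "t \<in> {(1,2,3),(1,2,4),(1,2,5),(1,2,6),(1,3,4),(1,3,5),(1,3,6),(1,4,5),(1,4,6),(1,5,6),
     (2,3,4),(2,3,5),(2,3,6),(2,4,5),(2,4,6),(2,5,6),(3,4,5),(3,4,6),(3,5,6),(4,5,6)}"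
      using hi hj hk t(2,3) unfolding t(1) by (elim disjE) simp_all
  qed (auto simp: S6_def)
  show ?thesis unfolding T16_def S by (simp add: insert_Diff_if)
qed

lemma lag_eq: "lag_poly G26 x = x 1*x 2*x 4 + x 1*x 2*x 5 + x 1*x 4*x 5 + x 2*x 4*x 5 + x 1*x 3*x 4 + x 1*x 4*x 6
   + x 1*x 3*x 5 + x 1*x 5*x 6 + x 2*x 3*x 4 + x 2*x 4*x 6 + x 2*x 3*x 5 + x 2*x 5*x 6
   + x 1*x 3*x 6 + x 2*x 3*x 6 + x 3*x 4*x 6 + x 3*x 5*x 6" (is "_ = ?R")
proof -
  have inj: "inj_on f3 T16" using inj_f3 unfolding T16_def by (rule inj_on_subset) auto
  have "lag_poly G26 x = (\<Sum>t\<in>T16. \<Prod>i\<in>f3 t. x i)"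
    unfolding lag_poly_def G26_img by (rule sum.reindex[OF inj, unfolded comp_def])
  also have "\<dots> = (\<Sum>t\<in>T16. case t of (i,j,k) \<Rightarrow> x i * x j * x k)"
    by (rule sum.cong) (auto simp: T16_def S6_def f3_def)
  also have "\<dots> = ?R"
    unfolding T16_eq by (simp add: algebra_simps)
  finally show ?thesis .
qed

lemma key:
  fixes x1 x2 x3 x4 x5 x6 :: real
  assumes "x1\<ge>0" "x2\<ge>0" "x3\<ge>0" "x4\<ge>0" "x5\<ge>0" "x6\<ge>0" "x1+x2+x3+x4+x5+x6 = 1"
  shows "x1*x2*x4 + x1*x2*x5 + x1*x4*x5 + x2*x4*x5 + x1*x3*x4 + x1*x4*x6
   + x1*x3*x5 + x1*x5*x6 + x2*x3*x4 + x2*x4*x6 + x2*x3*x5 + x2*x5*x6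
   + x1*x3*x6 + x2*x3*x6 + x3*x4*x6 + x3*x5*x6 \<le> 2/27"
proof -
  define a where "a = x1+x2"
  define b where "b = x4+x5"
  define s where "s = x3+x6"
  define t where "t = a+b"
  have a0: "a\<ge>0" "b\<ge>0" "s\<ge>0" "t \<ge> 0" using assms by (auto simp: a_def b_def s_def t_def)
  have st: "s = 1 - t" using assms(7) by (simp add: a_def b_def s_def t_def)
  have t1: "t \<le> 1" using st a0 by linarith
  have eq: "x1*x2*x4 + x1*x2*x5 + x1*x4*x5 + x2*x4*x5 + x1*x3*x4 + x1*x4*x6
   + x1*x3*x5 + x1*x5*x6 + x2*x3*x4 + x2*x4*x6 + x2*x3*x5 + x2*x5*x6
   + x1*x3*x6 + x2*x3*x6 + x3*x4*x6 + x3*x5*x6 = a*b*s + (x3*x6)*t + (x1*x2)*b + (x4*x5)*a"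
    by (simp add: a_def b_def s_def t_def algebra_simps)
  have h1: "x1*x2 \<le> a^2/4" using zero_le_square[of "x1-x2"] unfolding a_def
    by (simp add: power2_eq_square algebra_simps)
  have h2: "x4*x5 \<le> b^2/4" using zero_le_square[of "x4-x5"] unfolding b_def
    by (simp add: power2_eq_square algebra_simps)
  have h3: "x3*x6 \<le> s^2/4" using zero_le_square[of "x3-x6"] unfolding s_def
    by (simp add: power2_eq_square algebra_simps)
  have h4: "a*b \<le> t^2/4" using zero_le_square[of "a-b"] unfolding t_def
    by (simp add: power2_eq_square algebra_simps)
  have "a*b*s + (x3*x6)*t + (x1*x2)*b + (x4*x5)*a \<le> a*b*s + (s^2/4)*t + (a^2/4)*b + (b^2/4)*a"
    using h1 h2 h3 a0 by (intro add_mono mult_right_mono) auto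
  also have "\<dots> = a*b*(s + t/4) + t*s^2/4" by (simp add: t_def algebra_simps power2_eq_square)
  also have "\<dots> \<le> (t^2/4)*(s+t/4) + t*s^2/4" using h4 a0 by (intro add_mono mult_right_mono) auto
  also have "\<dots> = t*(2-t)^2/16" unfolding st by (simp add: field_simps power2_eq_square)
  also have "\<dots> \<le> 2/27"
  proof -
    have "0 \<le> (3*t-2)^2*(8-3*t)" using t1 by simp
    then show ?thesis by (simp add: algebra_simps power2_eq_square)
  qed
  finally show ?thesis using eq by linarith
qed

lemma sum6: "(\<Sum>i=1..6. (x::nat\<Rightarrow>real) i) = x 1 + x 2 + x 3 + x 4 + x 5 + x 6"
  by (simp add: sum.atLeast_Suc_atMost numeral_eq_Suc)

theorem lemma4p2:
  shows "lagrangian 6 G26 \<le> 2 / 27"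
  unfolding lagrangian_def
proof (rule cSUP_least)
  show "std_simplex 6 \<noteq> {}"
  proof
    assume "std_simplex 6 = {}"
    moreover have "(\<lambda>i. if i = 1 then 1 else 0) \<in> std_simplex 6"
      unfolding std_simplex_def by (simp add: sum6)
    ultimately show False by simp
  qed
next
  fix x assume "x \<in> std_simplex 6"
  then have "\<forall>i\<in>{1..6}. x i \<ge> 0" "(\<Sum>i=1..6. x i) = 1" unfolding std_simplex_def by auto
  then show "lag_poly G26 x \<le> 2/27" unfolding lag_eq sum6
    by (intro key) auto
qed

end
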